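(* Let $\mathcal A$ be an abelian category and let $0\to F\xrightarrow{i} M\xrightarrow{d} C\to 0$ be a fully invariant short exact sequence in $\mathcal A$. (1) $M$ is strongly self-$F$-split if and only if $M$ is self-$F$-split and every direct summand of $M$ which contains $F$ is fully invariant. (2) $M$ is dual strongly self-$F$-split if and only if $M$ is dual self-$F$-split and every direct summand of $M$ which is contained in $F$ is fully invariant.
   Context: Let $\mathcal A$ be an abelian category. A morphism $s:X\to Y$ is a section if $ts=1_X$ for some $t:Y\to X$, and a retraction if $st=1_Y$ for some $t$. A monomorphism $i:K\to M$ is fully invariant if for every morphism $h:M\to M$ there is $\alpha:K\to K$ with $hi=i\alpha$; an epimorphism $d:M\to C$ is fully coinvariant if for every $h:M\to M$ there is $\beta:C\to C$ with $dh=\beta d$. A subobject is fully invariant if its inclusion monomorphism is. A short exact sequence $0\to F\xrightarrow{i}N\xrightarrow{d}C\to 0$ is fully invariant if $i$ is fully invariant (equivalently $d$ is fully coinvariant). A (fully invariant) direct summand is a subobject whose inclusion is a (fully invariant) section. For an object $M$ and a fully invariant short exact sequence $0\to F\xrightarrow{i}N\xrightarrow{d}C\to 0$: $N$ is $M$-$F$-split (resp. strongly $M$-$F$-split) if for every morphism $g:M\to N$ the kernel $\ker(dg)$ (equivalently, the morphism $j:P\to M$ in the pullback of $i$ along $g$) is a section (resp. a fully invariant section); $N$ is dual $M$-$F$-split (resp. dual strongly $M$-$F$-split) if for every morphism $g:N\to M$ the cokernel $\mathrm{coker}(gi)$ (equivalently, the morphism $p:M\to Q$ in the pushout of $d$ along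 $g$) is a retraction (resp. a fully coinvariant retraction). $N$ is (dual) (strongly) self-$F$-split if it is (dual) (strongly) $N$-$F$-split. *)

theory Defs
  imports Main
begin

text \<open>A category with a preadditive structure given as data: objects, morphisms,
  domain, codomain, identities, composition (Cmp g f = g after f),
  and on each hom-set an abelian group structure (Add, Neg, Zer a b).\<close>

record ('o, 'm) acat =
  Obj :: "'o set"
  Mor :: "'m set"
  Dom :: "'m \<Rightarrow> 'o"
  Cod :: "'m \<Rightarrow> 'o"
  Idt :: "'o \<Rightarrow> 'm"
  Cmp :: "'m \<Rightarrow> 'm \<Rightarrow> 'm"
  Add :: "'m \<Rightarrow> 'm \<Rightarrow> 'm"
  Neg :: "'m \<Rightarrow> 'm"
  Zer :: "'o \<Rightarrow> 'o \<Rightarrow> 'm"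

definition hom :: "('o,'m) acat \<Rightarrow> 'o \<Rightarrow> 'o \<Rightarrow> 'm set" where
  "hom C a b = {f. f \<in> Mor C \<and> Dom C f = a \<and> Cod C f = b}"

definition category :: "('o,'m) acat \<Rightarrow> bool" where
  "category C \<longleftrightarrow>
     (\<forall>f\<in>Mor C. Dom C f \<in> Obj C \<and> Cod C f \<in> Obj C) \<and>
     (\<forall>a\<in>Obj C. Idt C a \<in> hom C a a) \<and>
     (\<forall>f\<in>Mor C. \<forall>g\<in>Mor C. Cod C f = Dom C g \<longrightarrow> Cmp C g f \<in> hom C (Dom C f) (Cod C g)) \<and>
     (\<forall>f\<in>Mor C. Cmp C f (Idt C (Dom C f)) = f \<and> Cmp C (Idt C (Cod C f)) f = f) \<and>
     (\<forall>f\<in>Mor C. \<forall>g\<in>Mor C. \<forall>h\<in>Mor C. Cod C f = Dom C g \<and> Cod C g = Dom C h \<longrightarrow>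
        Cmp C h (Cmp C g f) = Cmp C (Cmp C h g) f)"

definition preadditive :: "('o,'m) acat \<Rightarrow> bool" where
  "preadditive C \<longleftrightarrow> category C \<and>
     (\<forall>a\<in>Obj C. \<forall>b\<in>Obj C. Zer C a b \<in> hom C a b \<and>
        (\<forall>f\<in>hom C a b. Neg C f \<in> hom C a b \<and> Add C f (Zer C a b) = f \<and>
            Add C f (Neg C f) = Zer C a b \<and>
          (\<forall>g\<in>hom C a b. Add C f g \<in> hom C a b \<and> Add C f g = Add C g f \<and>
            (\<forall>h\<in>hom C a b. Add C (Add C f g) h = Add C f (Add C g h))))) \<and>
     (\<forall>a\<in>Obj C. \<forall>b\<in>Obj C. \<forall>c\<in>Obj C.
        (\<forall>f\<in>hom C a b. \<forall>g\<in>hom C a b. \<forall>h\<in>hom C b c.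
            Cmp C h (Add C f g) = Add C (Cmp C h f) (Cmp C h g)) \<and>
        (\<forall>f\<in>hom C a b. \<forall>g\<in>hom C b c. \<forall>h\<in>hom C b c.
            Cmp C (Add C g h) f = Add C (Cmp C g f) (Cmp C h f)))"

definition zero_object :: "('o,'m) acat \<Rightarrow> 'o \<Rightarrow> bool" where
  "zero_object C z \<longleftrightarrow> z \<in> Obj C \<and>
     (\<forall>a\<in>Obj C. (\<exists>!f. f \<in> hom C a z) \<and> (\<exists>!f. f \<in> hom C z a))"

definition biproduct :: "('o,'m) acat \<Rightarrow> 'o \<Rightarrow> 'o \<Rightarrow> 'o \<Rightarrow> 'm \<Rightarrow> 'm \<Rightarrow> 'm \<Rightarrow> 'm \<Rightarrow> bool" where
  "biproduct C a b p i1 i2 p1 p2 \<longleftrightarrow> p \<in> Obj C \<and>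
     i1 \<in> hom C a p \<and> i2 \<in> hom C b p \<and> p1 \<in> hom C p a \<and> p2 \<in> hom C p b \<and>
     Cmp C p1 i1 = Idt C a \<and> Cmp C p2 i2 = Idt C b \<and>
     Cmp C p1 i2 = Zer C b a \<and> Cmp C p2 i1 = Zer C a b \<and>
     Add C (Cmp C i1 p1) (Cmp C i2 p2) = Idt C p"

definition mono :: "('o,'m) acat \<Rightarrow> 'm \<Rightarrow> bool" where
  "mono C m \<longleftrightarrow> m \<in> Mor C \<and>
     (\<forall>g\<in>Mor C. \<forall>h\<in>Mor C. Cod C g = Dom C m \<and> Cod C h = Dom C m \<and> Dom C g = Dom C h \<and>
        Cmp C m g = Cmp C m h \<longrightarrow> g = h)"

definition epi :: "('o,'m) acat \<Rightarrow> 'm \<Rightarrow> bool" where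
  "epi C e \<longleftrightarrow> e \<in> Mor C \<and>
     (\<forall>g\<in>Mor C. \<forall>h\<in>Mor C. Dom C g = Cod C e \<and> Dom C h = Cod C e \<and> Cod C g = Cod C h \<and>
        Cmp C g e = Cmp C h e \<longrightarrow> g = h)"

definition is_kernel :: "('o,'m) acat \<Rightarrow> 'm \<Rightarrow> 'm \<Rightarrow> bool" where
  "is_kernel C f k \<longleftrightarrow> f \<in> Mor C \<and> k \<in> Mor C \<and> Cod C k = Dom C f \<and>
     Cmp C f k = Zer C (Dom C k) (Cod C f) \<and>
     (\<forall>h\<in>Mor C. Cod C h = Dom C f \<and> Cmp C f h = Zer C (Dom C h) (Cod C f) \<longrightarrow>
        (\<exists>!u. u \<in> hom C (Dom C h) (Dom C k) \<and> Cmp C k u = h))"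

definition is_cokernel :: "('o,'m) acat \<Rightarrow> 'm \<Rightarrow> 'm \<Rightarrow> bool" where
  "is_cokernel C f q \<longleftrightarrow> f \<in> Mor C \<and> q \<in> Mor C \<and> Dom C q = Cod C f \<and>
     Cmp C q f = Zer C (Dom C f) (Cod C q) \<and>
     (\<forall>h\<in>Mor C. Dom C h = Cod C f \<and> Cmp C h f = Zer C (Dom C f) (Cod C h) \<longrightarrow>
        (\<exists>!u. u \<in> hom C (Cod C q) (Cod C h) \<and> Cmp C u q = h))"

definition abelian :: "('o,'m) acat \<Rightarrow> bool" where
  "abelian C \<longleftrightarrow> preadditive C \<and> (\<exists>z. zero_object C z) \<and>
     (\<forall>a\<in>Obj C. \<forall>b\<in>Obj C. \<exists>p i1 i2 p1 p2. biproduct C a b p i1 i2 p1 p2) \<and>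
     (\<forall>f\<in>Mor C. \<exists>k. is_kernel C f k) \<and>
     (\<forall>f\<in>Mor C. \<exists>q. is_cokernel C f q) \<and>
     (\<forall>m. mono C m \<longrightarrow> (\<exists>f. is_kernel C f m)) \<and>
     (\<forall>e. epi C e \<longrightarrow> (\<exists>f. is_cokernel C f e))"

definition "section" :: "('o,'m) acat \<Rightarrow> 'm \<Rightarrow> bool" where
  "section C s \<longleftrightarrow> s \<in> Mor C \<and> (\<exists>t\<in>hom C (Cod C s) (Dom C s). Cmp C t s = Idt C (Dom C s))"

definition retraction :: "('o,'m) acat \<Rightarrow> 'm \<Rightarrow> bool" where
  "retraction C s \<longleftrightarrow> s \<in> Mor C \<and> (\<exists>t\<in>hom C (Cod C s) (Dom C s). Cmp C s t = Idt C (Cod C s))"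

definition fully_invariant :: "('o,'m) acat \<Rightarrow> 'm \<Rightarrow> bool" where
  "fully_invariant C i \<longleftrightarrow> mono C i \<and>
     (\<forall>h\<in>hom C (Cod C i) (Cod C i). \<exists>\<alpha>\<in>hom C (Dom C i) (Dom C i). Cmp C h i = Cmp C i \<alpha>)"

definition fully_coinvariant :: "('o,'m) acat \<Rightarrow> 'm \<Rightarrow> bool" where
  "fully_coinvariant C d \<longleftrightarrow> epi C d \<and>
     (\<forall>h\<in>hom C (Dom C d) (Dom C d). \<exists>\<beta>\<in>hom C (Cod C d) (Cod C d). Cmp C d h = Cmp C \<beta> d)"

definition short_exact :: "('o,'m) acat \<Rightarrow> 'm \<Rightarrow> 'm \<Rightarrow> bool" where
  "short_exact C i d \<longleftrightarrow> Cod C i = Dom C d \<and> mono C i \<and> epi C d \<and>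
     is_kernel C d i \<and> is_cokernel C i d"

definition fully_invariant_ses :: "('o,'m) acat \<Rightarrow> 'm \<Rightarrow> 'm \<Rightarrow> bool" where
  "fully_invariant_ses C i d \<longleftrightarrow> short_exact C i d \<and> fully_invariant C i"

text \<open>N = Cod i is M-F-split etc.\<close>
definition M_F_split :: "('o,'m) acat \<Rightarrow> 'o \<Rightarrow> 'm \<Rightarrow> 'm \<Rightarrow> bool" where
  "M_F_split C M i d \<longleftrightarrow> fully_invariant_ses C i d \<and> M \<in> Obj C \<and>
     (\<forall>g\<in>hom C M (Cod C i). \<forall>k. is_kernel C (Cmp C d g) k \<longrightarrow> section C k)"

definition strongly_M_F_split :: "('o,'m) acat \<Rightarrow> 'o \<Rightarrow> 'm \<Rightarrow> 'm \<Rightarrow> bool" where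
  "strongly_M_F_split C M i d \<longleftrightarrow> fully_invariant_ses C i d \<and> M \<in> Obj C \<and>
     (\<forall>g\<in>hom C M (Cod C i). \<forall>k. is_kernel C (Cmp C d g) k \<longrightarrow>
        section C k \<and> fully_invariant C k)"

definition dual_M_F_split :: "('o,'m) acat \<Rightarrow> 'o \<Rightarrow> 'm \<Rightarrow> 'm \<Rightarrow> bool" where
  "dual_M_F_split C M i d \<longleftrightarrow> fully_invariant_ses C i d \<and> M \<in> Obj C \<and>
     (\<forall>g\<in>hom C (Cod C i) M. \<forall>p. is_cokernel C (Cmp C g i) p \<longrightarrow> retraction C p)"

definition dual_strongly_M_F_split :: "('o,'m) acat \<Rightarrow> 'o \<Rightarrow> 'm \<Rightarrow> 'm \<Rightarrow> bool" where
  "dual_strongly_M_F_split C M i d \<longleftrightarrow> fully_invariant_ses C i d \<and> M \<in> Obj C \<and>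
     (\<forall>g\<in>hom C (Cod C i) M. \<forall>p. is_cokernel C (Cmp C g i) p \<longrightarrow>
        retraction C p \<and> fully_coinvariant C p)"

definition "self_F_split C i d = M_F_split C (Cod C i) i d"
definition "strongly_self_F_split C i d = strongly_M_F_split C (Cod C i) i d"
definition "dual_self_F_split C i d = dual_M_F_split C (Cod C i) i d"
definition "dual_strongly_self_F_split C i d = dual_strongly_M_F_split C (Cod C i) i d"

text \<open>A direct summand of M, represented by its inclusion k (a section with codomain M).\<close>
definition direct_summand :: "('o,'m) acat \<Rightarrow> 'o \<Rightarrow> 'm \<Rightarrow> bool" where
  "direct_summand C M k \<longleftrightarrow> section C k \<and> Cod C k = M"

definition sub_le :: "('o,'m) acat \<Rightarrow> 'm \<Rightarrow> 'm \<Rightarrow> bool" where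
  "sub_le C a b \<longleftrightarrow> (\<exists>u\<in>hom C (Dom C a) (Dom C b). Cmp C b u = a)"

end

theory Submission
  imports Defs
begin


lemma ker_fac: assumes "is_kernel C f k" "h \<in> hom C a (Dom C f)" "Cmp C f h = Zer C a (Cod C f)"
  shows "\<exists>u. u \<in> hom C a (Dom C k) \<and> Cmp C k u = h"
proof -
  have "h \<in> Mor C" "Dom C h = a" "Cod C h = Dom C f" using assms(2) by (auto simp: hom_def)
  then have "\<exists>!u. u \<in> hom C (Dom C h) (Dom C k) \<and> Cmp C k u = h"
    using assms(1,3) unfolding is_kernel_def by blast
  then show ?thesis using \<open>Dom C h = a\<close> by blast
qed

lemma coker_fac: assumes "is_cokernel C f q" "h \<in> hom C (Cod C f) b" "Cmp C h f = Zer C (Dom C f) b"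
  shows "\<exists>u. u \<in> hom C (Cod C q) b \<and> Cmp C u q = h"
proof -
  have "h \<in> Mor C" "Dom C h = Cod C f" "Cod C h = b" using assms(2) by (auto simp: hom_def)
  then have "\<exists>!u. u \<in> hom C (Cod C q) (Cod C h) \<and> Cmp C u q = h"
    using assms(1,3) unfolding is_cokernel_def by blast
  then show ?thesis using \<open>Cod C h = b\<close> by blast
qed


lemma ker_basic: assumes "is_kernel C f k"
  shows "k \<in> hom C (Dom C k) (Dom C f)" "f \<in> hom C (Dom C f) (Cod C f)"
    "Cmp C f k = Zer C (Dom C k) (Cod C f)"
  using assms unfolding is_kernel_def hom_def by auto

lemma coker_basic: assumes "is_cokernel C f q"
  shows "q \<in> hom C (Cod C f) (Cod C q)" "f \<in> hom C (Dom C f) (Cod C f)"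
    "Cmp C q f = Zer C (Dom C f) (Cod C q)"
  using assms unfolding is_cokernel_def hom_def by auto


lemma mono_cancel: assumes "mono C k" "g \<in> hom C a (Dom C k)" "h \<in> hom C a (Dom C k)"
    "Cmp C k g = Cmp C k h" shows "g = h"
  using assms unfolding mono_def hom_def by auto

locale pa = fixes C :: "('o,'m) acat" assumes pa: "preadditive C"
begin

lemma cat: "category C" using pa unfolding preadditive_def by blast

lemma homD: "f \<in> hom C a b \<Longrightarrow> f \<in> Mor C \<and> Dom C f = a \<and> Cod C f = b"
  by (simp add: hom_def)

lemma homI: "f \<in> Mor C \<Longrightarrow> f \<in> hom C (Dom C f) (Cod C f)"
  by (simp add: hom_def)

lemma hom_objs: "f \<in> hom C a b \<Longrightarrow> a \<in> Obj C \<and> b \<in> Obj C"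
  using cat unfolding category_def hom_def by blast

lemma comp_hom: "f \<in> hom C a b \<Longrightarrow> g \<in> hom C b c \<Longrightarrow> Cmp C g f \<in> hom C a c"
  using cat unfolding category_def hom_def by force

lemma assoc: "f \<in> hom C a b \<Longrightarrow> g \<in> hom C b c \<Longrightarrow> h \<in> hom C c e \<Longrightarrow>
   Cmp C h (Cmp C g f) = Cmp C (Cmp C h g) f"
  using cat unfolding category_def hom_def by force

lemma id_hom: "a \<in> Obj C \<Longrightarrow> Idt C a \<in> hom C a a"
  using cat unfolding category_def by blast

lemma idl: "f \<in> hom C a b \<Longrightarrow> Cmp C (Idt C b) f = f"
  using cat unfolding category_def hom_def by force

lemma idr: "f \<in> hom C a b \<Longrightarrow> Cmp C f (Idt C a) = f"
  using cat unfolding category_def hom_def by force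

lemma zer_hom: "a \<in> Obj C \<Longrightarrow> b \<in> Obj C \<Longrightarrow> Zer C a b \<in> hom C a b"
  using pa unfolding preadditive_def by blast

lemma add_hom: "f \<in> hom C a b \<Longrightarrow> g \<in> hom C a b \<Longrightarrow> Add C f g \<in> hom C a b"
  using pa hom_objs unfolding preadditive_def by blast

lemma neg_hom: "f \<in> hom C a b \<Longrightarrow> Neg C f \<in> hom C a b"
  using pa hom_objs unfolding preadditive_def by blast

lemma add_comm: "f \<in> hom C a b \<Longrightarrow> g \<in> hom C a b \<Longrightarrow> Add C f g = Add C g f"
  using pa hom_objs unfolding preadditive_def by blast

lemma add_assoc: "f \<in> hom C a b \<Longrightarrow> g \<in> hom C a b \<Longrightarrow> h \<in> hom C a b \<Longrightarrow>
   Add C (Add C f g) h = Add C f (Add C g h)"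
  using pa hom_objs unfolding preadditive_def by blast

lemma add_zero: "f \<in> hom C a b \<Longrightarrow> Add C f (Zer C a b) = f"
  using pa hom_objs unfolding preadditive_def by blast

lemma add_neg: "f \<in> hom C a b \<Longrightarrow> Add C f (Neg C f) = Zer C a b"
  using pa hom_objs unfolding preadditive_def by blast

lemma distl: "f \<in> hom C a b \<Longrightarrow> g \<in> hom C a b \<Longrightarrow> h \<in> hom C b c \<Longrightarrow>
   Cmp C h (Add C f g) = Add C (Cmp C h f) (Cmp C h g)"
proof -
  assume a: "f \<in> hom C a b" "g \<in> hom C a b" "h \<in> hom C b c"
  then have "a \<in> Obj C" "b \<in> Obj C" "c \<in> Obj C" using hom_objs by blast+
  then show ?thesis using pa a unfolding preadditive_def by blast
qed

lemma distr: "f \<in> hom C a b \<Longrightarrow> g \<in> hom C b c \<Longrightarrow> h \<in> hom C b c \<Longrightarrow>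
   Cmp C (Add C g h) f = Add C (Cmp C g f) (Cmp C h f)"
proof -
  assume a: "f \<in> hom C a b" "g \<in> hom C b c" "h \<in> hom C b c"
  then have "a \<in> Obj C" "b \<in> Obj C" "c \<in> Obj C" using hom_objs by blast+
  then show ?thesis using pa a unfolding preadditive_def by blast
qed

lemma cancel: assumes "x \<in> hom C a b" "y \<in> hom C a b" "Add C x y = y"
  shows "x = Zer C a b"
proof -
  have "x = Add C x (Add C y (Neg C y))" using assms add_neg add_zero by metis
  also have "\<dots> = Add C (Add C x y) (Neg C y)" using assms add_assoc neg_hom by metis
  also have "\<dots> = Zer C a b" using assms add_neg by simp
  finally show ?thesis .
qed

lemma comp_zer_r: assumes "h \<in> hom C b c" "a \<in> Obj C"
  shows "Cmp C h (Zer C a b) = Zer C a c"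
proof -
  have z: "Zer C a b \<in> hom C a b" using assms hom_objs zer_hom by blast
  have "Add C (Cmp C h (Zer C a b)) (Cmp C h (Zer C a b)) = Cmp C h (Zer C a b)"
    using distl[OF z z assms(1)] add_zero[OF z] by simp
  then show ?thesis using cancel comp_hom z assms by blast
qed

lemma comp_zer_l: assumes "f \<in> hom C a b" "c \<in> Obj C"
  shows "Cmp C (Zer C b c) f = Zer C a c"
proof -
  have z: "Zer C b c \<in> hom C b c" using assms hom_objs zer_hom by blast
  have "Add C (Cmp C (Zer C b c) f) (Cmp C (Zer C b c) f) = Cmp C (Zer C b c) f"
    using distr[OF assms(1) z z] add_zero[OF z] by simp
  then show ?thesis using cancel comp_hom z assms by blast
qed

lemma complement: assumes "e \<in> hom C a a"
  shows "\<exists>n\<in>hom C a a. Add C n e = Idt C a"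
proof -
  have I: "Idt C a \<in> hom C a a" using assms hom_objs id_hom by blast
  have N: "Neg C e \<in> hom C a a" using assms neg_hom by blast
  have "Add C (Add C (Idt C a) (Neg C e)) e = Add C (Idt C a) (Add C (Neg C e) e)"
    using add_assoc I N assms by blast
  also have "\<dots> = Idt C a" using add_comm[OF N assms] add_neg[OF assms] add_zero[OF I] by simp
  finally show ?thesis using add_hom[OF I N] by blast
qed

lemma section_mono: assumes "section C k" shows "mono C k"
proof -
  obtain t where t: "t \<in> hom C (Cod C k) (Dom C k)" "Cmp C t k = Idt C (Dom C k)"
    using assms unfolding section_def by blast
  have k: "k \<in> hom C (Dom C k) (Cod C k)" using assms homI unfolding section_def by blast
  show ?thesis unfolding mono_def
  proof (intro conjI ballI impI)
    show "k \<in> Mor C" using k homD by blast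
    fix g h assume gh: "g \<in> Mor C" "h \<in> Mor C"
      "Cod C g = Dom C k \<and> Cod C h = Dom C k \<and> Dom C g = Dom C h \<and> Cmp C k g = Cmp C k h"
    have g: "g \<in> hom C (Dom C g) (Dom C k)" using gh homI by metis
    have h: "h \<in> hom C (Dom C g) (Dom C k)" using gh homI by metis
    have "g = Cmp C (Cmp C t k) g" using t idl g by simp
    also have "\<dots> = Cmp C t (Cmp C k h)" using assoc[OF g k t(1)] gh by simp
    also have "\<dots> = h" using assoc[OF h k t(1)] t idl h by simp
    finally show "g = h" .
  qed
qed

lemma retraction_epi: assumes "retraction C p" shows "epi C p"
proof -
  obtain s where s: "s \<in> hom C (Cod C p) (Dom C p)" "Cmp C p s = Idt C (Cod C p)"
    using assms unfolding retraction_def by blast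
  have p: "p \<in> hom C (Dom C p) (Cod C p)" using assms homI unfolding retraction_def by blast
  show ?thesis unfolding epi_def
  proof (intro conjI ballI impI)
    show "p \<in> Mor C" using p homD by blast
    fix g h assume gh: "g \<in> Mor C" "h \<in> Mor C"
      "Dom C g = Cod C p \<and> Dom C h = Cod C p \<and> Cod C g = Cod C h \<and> Cmp C g p = Cmp C h p"
    have g: "g \<in> hom C (Cod C p) (Cod C g)" using gh homI by metis
    have h: "h \<in> hom C (Cod C p) (Cod C g)" using gh homI by metis
    have "g = Cmp C g (Cmp C p s)" using s idr g by simp
    also have "\<dots> = Cmp C (Cmp C h p) s" using assoc[OF s(1) p g] gh by simp
    also have "\<dots> = h" using assoc[OF s(1) p h] s idr h by simp
    finally show "g = h" .
  qed
qed

lemma kernel_mono: assumes "is_kernel C f k" shows "mono C k"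
  unfolding mono_def
proof (intro conjI ballI impI)
  show "k \<in> Mor C" using assms unfolding is_kernel_def by blast
  have k: "k \<in> hom C (Dom C k) (Dom C f)" using assms homI unfolding is_kernel_def by metis
  have f: "f \<in> hom C (Dom C f) (Cod C f)" using assms homI unfolding is_kernel_def by metis
  fix g h assume gh: "g \<in> Mor C" "h \<in> Mor C"
    "Cod C g = Dom C k \<and> Cod C h = Dom C k \<and> Dom C g = Dom C h \<and> Cmp C k g = Cmp C k h"
  have g: "g \<in> hom C (Dom C g) (Dom C k)" using gh homI by metis
  have h: "h \<in> hom C (Dom C g) (Dom C k)" using gh homI by metis
  have kg: "Cmp C k g \<in> hom C (Dom C g) (Dom C f)" using comp_hom g k by blast
  have "Cmp C f (Cmp C k g) = Zer C (Dom C g) (Cod C f)"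
    using assoc[OF g k f] assms comp_zer_l g hom_objs f unfolding is_kernel_def by metis
  then have "\<exists>!u. u \<in> hom C (Dom C (Cmp C k g)) (Dom C k) \<and> Cmp C k u = Cmp C k g"
    using assms kg homD unfolding is_kernel_def by metis
  then show "g = h" using g h gh kg homD by metis
qed

end


lemma ses_facts:
  assumes "abelian C" "fully_invariant_ses C i d"
  shows "pa C" "i \<in> hom C (Dom C i) (Cod C i)" "d \<in> hom C (Cod C i) (Cod C d)"
    "Cmp C d i = Zer C (Dom C i) (Cod C d)" "is_kernel C d i" "is_cokernel C i d"
    "fully_invariant C i"
proof -
  show P: "pa C" using assms unfolding abelian_def pa_def by blast
  have se: "short_exact C i d" using assms unfolding fully_invariant_ses_def by blast
  then show "is_kernel C d i" "is_cokernel C i d" unfolding short_exact_def by blast+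
  show "fully_invariant C i" using assms unfolding fully_invariant_ses_def by blast
  show "i \<in> hom C (Dom C i) (Cod C i)" using se pa.homI[OF P] unfolding short_exact_def mono_def by blast
  show "d \<in> hom C (Cod C i) (Cod C d)" using se pa.homI[OF P] unfolding short_exact_def epi_def by metis
  show "Cmp C d i = Zer C (Dom C i) (Cod C d)" using se unfolding short_exact_def is_kernel_def by blast
qed

lemma part1_fwd:
  assumes ab: "abelian C" and ses: "fully_invariant_ses C i d"
    and st: "strongly_self_F_split C i d"
    and ds: "direct_summand C (Cod C i) k" and sl: "sub_le C i k"
  shows "fully_invariant C k"
proof -
  interpret pa C using ses_facts[OF ab ses] by blast
  define M where "M = Cod C i"
  define K where "K = Dom C k"
  define F where "F = Dom C i"
  define Q where "Q = Cod C d"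
  have i: "i \<in> hom C F M" using ses_facts[OF ab ses] unfolding F_def M_def by blast
  have d: "d \<in> hom C M Q" using ses_facts[OF ab ses] unfolding Q_def M_def by blast
  have di: "is_kernel C d i" using ses_facts[OF ab ses] by blast
  have ck: "Cod C k = M" using ds unfolding direct_summand_def M_def by blast
  obtain t where t: "t \<in> hom C M K" "Cmp C t k = Idt C K"
    using ds ck unfolding direct_summand_def section_def K_def by metis
  have k: "k \<in> hom C K M" using ds homI unfolding direct_summand_def section_def M_def K_def by metis
  obtain u where u: "u \<in> hom C F K" "Cmp C k u = i" using sl unfolding sub_le_def F_def K_def by blast
  have objs: "M \<in> Obj C" "K \<in> Obj C" "F \<in> Obj C" "Q \<in> Obj C" using hom_objs i d k by blast+
  define e where "e = Cmp C k t"
  have e: "e \<in> hom C M M" unfolding e_def using comp_hom t k by blast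
  obtain n where n: "n \<in> hom C M M" "Add C n e = Idt C M" using complement[OF e] by blast
  have ek: "Cmp C e k = k" unfolding e_def using assoc[OF k t(1) k] t idr k by simp
  have nk: "Cmp C n k = Zer C K M"
  proof (rule cancel)
    show "Cmp C n k \<in> hom C K M" "Cmp C e k \<in> hom C K M" using comp_hom k n e by blast+
    have "Add C (Cmp C n k) (Cmp C e k) = Cmp C (Idt C M) k" using distr[OF k n(1) e] n by simp
    then show "Add C (Cmp C n k) (Cmp C e k) = Cmp C e k" using idl k ek by simp
  qed
  have te: "Cmp C t e = t" unfolding e_def using assoc[OF t(1) k t(1)] t idl by simp
  have tn: "Cmp C t n = Zer C M K"
  proof (rule cancel)
    show "Cmp C t n \<in> hom C M K" "Cmp C t e \<in> hom C M K" using comp_hom t n e by blast+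
    have "Add C (Cmp C t n) (Cmp C t e) = Cmp C t (Idt C M)" using distl[OF n(1) e t(1)] n by simp
    then show "Add C (Cmp C t n) (Cmp C t e) = Cmp C t e" using idr t te by simp
  qed
  have en: "Cmp C e n = Zer C M M" unfolding e_def
    using assoc[OF n(1) t(1) k] tn comp_zer_r[OF k] objs by simp
  have nn: "Cmp C n n = n"
  proof -
    have "Add C (Cmp C n n) (Cmp C e n) = Cmp C (Idt C M) n" using distr[OF n(1) n(1) e] n by simp
    then have "Add C (Cmp C n n) (Zer C M M) = n" using en idl n by simp
    then show ?thesis using add_zero comp_hom n by metis
  qed
  have dn: "Cmp C d n \<in> hom C M Q" using comp_hom n d by blast
  have "is_kernel C (Cmp C d n) k" unfolding is_kernel_def
  proof (intro conjI ballI impI)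
    show "Cmp C d n \<in> Mor C" "k \<in> Mor C" using dn k homD by blast+
    show "Cod C k = Dom C (Cmp C d n)" using dn k homD by metis
    show "Cmp C (Cmp C d n) k = Zer C (Dom C k) (Cod C (Cmp C d n))"
      using assoc[OF k n(1) d] nk comp_zer_r[OF d] objs dn homD K_def by metis
    fix h assume h0: "h \<in> Mor C" "Cod C h = Dom C (Cmp C d n) \<and>
        Cmp C (Cmp C d n) h = Zer C (Dom C h) (Cod C (Cmp C d n))"
    define A where "A = Dom C h"
    have h: "h \<in> hom C A M" using h0 dn homD homI A_def by metis
    have A: "A \<in> Obj C" using h hom_objs by blast
    define nh where "nh = Cmp C n h"
    have nhh: "nh \<in> hom C A M" using comp_hom h n nh_def by blast
    have "Cmp C d nh = Zer C A Q" using h0 assoc[OF h n(1) d] dn homD nh_def A_def by metis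
    then obtain w where w: "w \<in> hom C A F" "Cmp C i w = nh"
      using ker_fac[OF di, of nh A] nhh homD d F_def Q_def by metis
    have uw: "Cmp C u w \<in> hom C A K" using comp_hom u w by blast
    have nh2: "nh = Cmp C k (Cmp C u w)" using assoc[OF w(1) u(1) k] u w by simp
    have "Cmp C n nh = Zer C A M" using nh2 assoc[OF uw k n(1)] nk comp_zer_l[OF uw] objs by simp
    moreover have "Cmp C n nh = nh" using assoc[OF h n(1) n(1)] nn nh_def by simp
    ultimately have nh0: "nh = Zer C A M" by simp
    have eh: "Cmp C e h \<in> hom C A M" using comp_hom h e by blast
    have "h = Cmp C (Idt C M) h" using idl h by simp
    also have "\<dots> = Add C nh (Cmp C e h)" using distr[OF h n(1) e] n nh_def by simp
    also have "\<dots> = Cmp C e h" using nh0 add_comm[OF _ eh] add_zero[OF eh] zer_hom[OF A] objs by metis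
    also have "\<dots> = Cmp C k (Cmp C t h)" unfolding e_def using assoc[OF h t(1) k] by simp
    finally have hk: "h = Cmp C k (Cmp C t h)" .
    have th: "Cmp C t h \<in> hom C (Dom C h) (Dom C k)" using comp_hom h t A_def K_def by blast
    have mk: "mono C k" using section_mono ds unfolding direct_summand_def by blast
    show "\<exists>!v. v \<in> hom C (Dom C h) (Dom C k) \<and> Cmp C k v = h"
    proof (rule ex1I[of _ "Cmp C t h"])
      show "Cmp C t h \<in> hom C (Dom C h) (Dom C k) \<and> Cmp C k (Cmp C t h) = h" using th hk by simp
      fix v assume v: "v \<in> hom C (Dom C h) (Dom C k) \<and> Cmp C k v = h"
      then show "v = Cmp C t h" using mk th hk homD unfolding mono_def by metis
    qed
  qed
  then show ?thesis using st n unfolding strongly_self_F_split_def strongly_M_F_split_def M_def by blast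
qed

lemma part1_bwd:
  assumes ab: "abelian C" and ses: "fully_invariant_ses C i d"
    and sp: "self_F_split C i d"
    and H: "\<forall>k. direct_summand C (Cod C i) k \<and> sub_le C i k \<longrightarrow> fully_invariant C k"
  shows "strongly_self_F_split C i d"
  unfolding strongly_self_F_split_def strongly_M_F_split_def
proof (intro conjI ballI allI impI)
  interpret pa C using ses_facts[OF ab ses] by blast
  show "fully_invariant_ses C i d" by fact
  show "Cod C i \<in> Obj C" using sp unfolding self_F_split_def M_F_split_def by blast
  fix g k assume g: "g \<in> hom C (Cod C i) (Cod C i)" and kk: "is_kernel C (Cmp C d g) k"
  show sk: "section C k" using sp g kk unfolding self_F_split_def M_F_split_def by blast
  define M where "M = Cod C i"
  define F where "F = Dom C i"
  define Q where "Q = Cod C d"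
  have i: "i \<in> hom C F M" using ses_facts[OF ab ses] unfolding F_def M_def by blast
  have d: "d \<in> hom C M Q" using ses_facts[OF ab ses] unfolding Q_def M_def by blast
  have dg: "Cmp C d g \<in> hom C M Q" using comp_hom g d M_def by blast
  have cod: "Cod C k = M" using ker_basic(1)[OF kk] dg homD by metis
  obtain a where a: "a \<in> hom C F F" "Cmp C g i = Cmp C i a"
    using ses_facts(7)[OF ab ses] g unfolding fully_invariant_def F_def by blast
  have "Cmp C (Cmp C d g) i = Cmp C (Cmp C d i) a"
    using assoc[OF i g[folded M_def] d] assoc[OF a(1) i d] a by simp
  also have "\<dots> = Zer C F Q" using ses_facts(4)[OF ab ses] comp_zer_l[OF a(1)] d hom_objs
    unfolding F_def Q_def by metis
  finally have "\<exists>w. w \<in> hom C (Dom C i) (Dom C k) \<and> Cmp C k w = i"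
    using ker_fac[OF kk] i dg homD F_def Q_def by metis
  then have "sub_le C i k" unfolding sub_le_def by blast
  then show "fully_invariant C k" using H sk cod M_def unfolding direct_summand_def by blast
qed


lemma part2_bwd:
  assumes ab: "abelian C" and ses: "fully_invariant_ses C i d"
    and sp: "dual_self_F_split C i d"
    and H: "\<forall>k. direct_summand C (Cod C i) k \<and> sub_le C k i \<longrightarrow> fully_invariant C k"
  shows "dual_strongly_self_F_split C i d"
  unfolding dual_strongly_self_F_split_def dual_strongly_M_F_split_def
proof (intro conjI ballI allI impI)
  interpret pa C using ses_facts[OF ab ses] by blast
  show "fully_invariant_ses C i d" by fact
  show "Cod C i \<in> Obj C" using sp unfolding dual_self_F_split_def dual_M_F_split_def by blast
  fix g p assume g0: "g \<in> hom C (Cod C i) (Cod C i)" and pc: "is_cokernel C (Cmp C g i) p"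
  show rp: "retraction C p" using sp g0 pc unfolding dual_self_F_split_def dual_M_F_split_def by blast
  define M where "M = Cod C i"
  define F where "F = Dom C i"
  define Q where "Q = Cod C d"
  define P where "P = Cod C p"
  have g: "g \<in> hom C M M" using g0 M_def by simp
  have i: "i \<in> hom C F M" using ses_facts[OF ab ses] unfolding F_def M_def by blast
  have d: "d \<in> hom C M Q" using ses_facts[OF ab ses] unfolding Q_def M_def by blast
  have di: "is_kernel C d i" using ses_facts[OF ab ses] by blast
  have gi: "Cmp C g i \<in> hom C F M" using comp_hom g i by blast
  have p: "p \<in> hom C M P" using coker_basic(1)[OF pc] gi homD P_def by metis
  have pgi: "Cmp C p (Cmp C g i) = Zer C F P" using coker_basic(3)[OF pc] gi homD P_def by metis
  have objs: "M \<in> Obj C" "F \<in> Obj C" "Q \<in> Obj C" "P \<in> Obj C" using hom_objs i d p by blast+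
  obtain s where s: "s \<in> hom C P M" "Cmp C p s = Idt C P"
    using rp p homD unfolding retraction_def P_def by metis
  obtain k where kk: "is_kernel C p k" using ab p homD unfolding abelian_def by metis
  define K where "K = Dom C k"
  have k: "k \<in> hom C K M" using ker_basic(1)[OF kk] p homD K_def by metis
  have pk: "Cmp C p k = Zer C K P" using ker_basic(3)[OF kk] p homD K_def P_def by metis
  have Kobj: "K \<in> Obj C" using k hom_objs by blast
  have mk: "mono C k" using kernel_mono kk by blast
  have spm: "Cmp C s p \<in> hom C M M" using comp_hom s p by blast
  obtain n where n: "n \<in> hom C M M" "Add C n (Cmp C s p) = Idt C M" using complement[OF spm] by blast
  have pn: "Cmp C p n = Zer C M P"
  proof (rule cancel)
    show "Cmp C p n \<in> hom C M P" "Cmp C p (Cmp C s p) \<in> hom C M P" using comp_hom p n spm by blast+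
    have "Add C (Cmp C p n) (Cmp C p (Cmp C s p)) = Cmp C p (Idt C M)" using distl[OF n(1) spm p] n by simp
    then show "Add C (Cmp C p n) (Cmp C p (Cmp C s p)) = Cmp C p (Cmp C s p)"
      using idr p assoc[OF p s(1) p] s idl by simp
  qed
  obtain t where t: "t \<in> hom C M K" "Cmp C k t = n"
    using ker_fac[OF kk, of n M] n pn p homD K_def P_def by metis
  have nk: "Cmp C n k = k"
  proof -
    have "k = Cmp C (Idt C M) k" using idl k by simp
    also have "\<dots> = Add C (Cmp C n k) (Cmp C (Cmp C s p) k)" using distr[OF k n(1) spm] n by simp
    also have "Cmp C (Cmp C s p) k = Zer C K M" using assoc[OF k p s(1)] pk comp_zer_r[OF s(1) Kobj] by simp
    finally show ?thesis using add_zero comp_hom k n by metis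
  qed
  have tk: "Cmp C t k = Idt C K"
  proof -
    have "Cmp C k (Cmp C t k) = Cmp C k (Idt C K)" using assoc[OF k t(1) k] t nk idr k by simp
    moreover have "Cmp C t k \<in> hom C K K" using comp_hom k t by blast
    moreover have "Idt C K \<in> hom C K K" using id_hom Kobj by blast
    ultimately show ?thesis using mono_cancel[OF mk] K_def by metis
  qed
  have sk: "section C k" unfolding section_def using k t tk homD by metis
  obtain a where a: "a \<in> hom C F F" "Cmp C g i = Cmp C i a"
    using ses_facts(7)[OF ab ses] g unfolding fully_invariant_def F_def M_def by blast
  have "Cmp C d (Cmp C g i) = Cmp C (Cmp C d i) a"
    using assoc[OF a(1) i d] a by simp
  also have "\<dots> = Zer C F Q" using ses_facts(4)[OF ab ses] comp_zer_l[OF a(1)] d hom_objs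
    unfolding F_def Q_def by metis
  finally obtain b where b: "b \<in> hom C P Q" "Cmp C b p = d"
    using coker_fac[OF pc, of d Q] d gi homD P_def by metis
  have "Cmp C d k = Zer C K Q" using assoc[OF k p b(1)] b pk comp_zer_r[OF b(1) Kobj] by simp
  then have "\<exists>w. w \<in> hom C (Dom C k) (Dom C i) \<and> Cmp C i w = k"
    using ker_fac[OF di, of k K] k d homD K_def Q_def by metis
  then have "sub_le C k i" unfolding sub_le_def by blast
  then have fik: "fully_invariant C k" using H sk k homD M_def unfolding direct_summand_def by blast
  show "fully_coinvariant C p" unfolding fully_coinvariant_def
  proof (intro conjI ballI)
    show "epi C p" using retraction_epi rp by blast
    fix h assume h0: "h \<in> hom C (Dom C p) (Dom C p)"
    have h: "h \<in> hom C M M" using h0 p homD by metis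
    obtain al where al: "al \<in> hom C K K" "Cmp C h k = Cmp C k al"
      using fik h k homD unfolding fully_invariant_def K_def by metis
    obtain w where w: "w \<in> hom C F K" "Cmp C k w = Cmp C g i"
      using ker_fac[OF kk, of "Cmp C g i" F] gi pgi homD p K_def P_def by metis
    have ph: "Cmp C p h \<in> hom C M P" using comp_hom h p by blast
    have "Cmp C (Cmp C p h) (Cmp C g i) = Cmp C p (Cmp C (Cmp C h k) w)"
      using w assoc[OF w(1) k h] assoc[OF gi h p] by simp
    also have "\<dots> = Cmp C (Cmp C p k) (Cmp C al w)"
      using al assoc[OF w(1) al(1) k] assoc[OF _ k p, of "Cmp C al w" F] comp_hom w al by simp
    also have "\<dots> = Zer C F P" using pk comp_zer_l comp_hom w al objs by metis
    finally obtain be where "be \<in> hom C P P" "Cmp C be p = Cmp C p h"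
      using coker_fac[OF pc, of "Cmp C p h" P] ph gi homD P_def by metis
    then show "\<exists>\<beta>\<in>hom C (Cod C p) (Cod C p). Cmp C p h = Cmp C \<beta> p" using P_def by metis
  qed
qed

lemma part2_fwd:
  assumes ab: "abelian C" and ses: "fully_invariant_ses C i d"
    and st: "dual_strongly_self_F_split C i d"
    and ds: "direct_summand C (Cod C i) k" and sl: "sub_le C k i"
  shows "fully_invariant C k"
proof -
  interpret pa C using ses_facts[OF ab ses] by blast
  define M where "M = Cod C i"
  define K where "K = Dom C k"
  define F where "F = Dom C i"
  have i: "i \<in> hom C F M" using ses_facts[OF ab ses] unfolding F_def M_def by blast
  have ck: "Cod C k = M" using ds unfolding direct_summand_def M_def by blast
  obtain t where t: "t \<in> hom C M K" "Cmp C t k = Idt C K"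
    using ds ck unfolding direct_summand_def section_def K_def by metis
  have k: "k \<in> hom C K M" using ds homI ck unfolding direct_summand_def section_def K_def by metis
  obtain u where u: "u \<in> hom C K F" "Cmp C i u = k" using sl unfolding sub_le_def F_def K_def by blast
  have Kobj: "K \<in> Obj C" using k hom_objs by blast
  define g where "g = Cmp C k t"
  have g: "g \<in> hom C M M" unfolding g_def using comp_hom t k by blast
  have gi: "Cmp C g i \<in> hom C F M" using comp_hom g i by blast
  obtain p where pc: "is_cokernel C (Cmp C g i) p" using ab gi homD unfolding abelian_def by metis
  define P where "P = Cod C p"
  have p: "p \<in> hom C M P" using coker_basic(1)[OF pc] gi homD P_def by metis
  have pgi: "Cmp C p (Cmp C g i) = Zer C F P" using coker_basic(3)[OF pc] gi homD P_def by metis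
  have fcp: "fully_coinvariant C p" using st g pc
    unfolding dual_strongly_self_F_split_def dual_strongly_M_F_split_def M_def by blast
  have mk: "mono C k" using section_mono ds unfolding direct_summand_def by blast
  obtain f where fk: "is_kernel C f k" using ab mk unfolding abelian_def by blast
  define X where "X = Cod C f"
  have f: "f \<in> hom C M X" using ker_basic(1,2)[OF fk] ck homD X_def by metis
  have fk0: "Cmp C f k = Zer C K X" using ker_basic(3)[OF fk] K_def X_def by metis
  have Xobj: "X \<in> Obj C" using f hom_objs by blast
  have ti: "Cmp C t i \<in> hom C F K" using comp_hom t i by blast
  have "Cmp C f (Cmp C g i) = Cmp C (Cmp C f k) (Cmp C t i)"
    unfolding g_def using assoc[OF i t(1) k] assoc[OF ti k f] by simp
  also have "\<dots> = Zer C F X" using fk0 comp_zer_l[OF ti Xobj] by simp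
  finally obtain b1 where b1: "b1 \<in> hom C P X" "Cmp C b1 p = f"
    using coker_fac[OF pc, of f X] f gi homD P_def by metis
  have kk: "k = Cmp C (Cmp C g i) u"
  proof -
    have "k = Cmp C k (Cmp C t k)" using t idr k by simp
    also have "\<dots> = Cmp C g k" unfolding g_def using assoc[OF k t(1) k] by simp
    also have "\<dots> = Cmp C (Cmp C g i) u" using u assoc[OF u(1) i g] by simp
    finally show ?thesis .
  qed
  have pk: "Cmp C p k = Zer C K P"
    using kk assoc[OF u(1) gi p] pgi comp_zer_l[OF u(1)] p hom_objs by metis
  show ?thesis unfolding fully_invariant_def
  proof (intro conjI ballI)
    show "mono C k" by fact
    fix h assume h0: "h \<in> hom C (Cod C k) (Cod C k)"
    have h: "h \<in> hom C M M" using h0 ck by simp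
    obtain be where be: "be \<in> hom C P P" "Cmp C p h = Cmp C be p"
      using fcp h p homD P_def unfolding fully_coinvariant_def by metis
    have hk: "Cmp C h k \<in> hom C K M" using comp_hom h k by blast
    have "Cmp C f (Cmp C h k) = Cmp C b1 (Cmp C (Cmp C p h) k)"
      using b1 assoc[OF k h p] assoc[OF hk p b1(1)] by simp
    also have "\<dots> = Cmp C b1 (Cmp C be (Cmp C p k))" using be assoc[OF k p be(1)] by simp
    also have "\<dots> = Zer C K X" using pk comp_zer_r[OF be(1) Kobj] comp_zer_r[OF b1(1) Kobj] by simp
    finally obtain a where "a \<in> hom C K K" "Cmp C k a = Cmp C h k"
      using ker_fac[OF fk, of "Cmp C h k" K] hk f homD K_def X_def by metis
    then show "\<exists>\<alpha>\<in>hom C (Dom C k) (Dom C k). Cmp C h k = Cmp C k \<alpha>" using K_def by metis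
  qed
qed

theorem theorem3p5:
  fixes C :: "('o, 'm) acat" and i d :: 'm
  assumes "abelian C"
    and "fully_invariant_ses C i d"
  shows "(strongly_self_F_split C i d \<longleftrightarrow>
            self_F_split C i d \<and>
            (\<forall>k. direct_summand C (Cod C i) k \<and> sub_le C i k \<longrightarrow> fully_invariant C k))
       \<and> (dual_strongly_self_F_split C i d \<longleftrightarrow>
            dual_self_F_split C i d \<and>
            (\<forall>k. direct_summand C (Cod C i) k \<and> sub_le C k i \<longrightarrow> fully_invariant C k))"
proof (intro conjI iffI allI impI)
  assume st: "strongly_self_F_split C i d"
  then show "self_F_split C i d"
    unfolding strongly_self_F_split_def strongly_M_F_split_def self_F_split_def M_F_split_def by blast
  fix k assume "direct_summand C (Cod C i) k \<and> sub_le C i k"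
  then show "fully_invariant C k" using part1_fwd[OF assms st] by blast
next
  assume "self_F_split C i d \<and>
     (\<forall>k. direct_summand C (Cod C i) k \<and> sub_le C i k \<longrightarrow> fully_invariant C k)"
  then show "strongly_self_F_split C i d" using part1_bwd[OF assms] by blast
next
  assume st: "dual_strongly_self_F_split C i d"
  then show "dual_self_F_split C i d"
    unfolding dual_strongly_self_F_split_def dual_strongly_M_F_split_def dual_self_F_split_def dual_M_F_split_def by blast
  fix k assume "direct_summand C (Cod C i) k \<and> sub_le C k i"
  then show "fully_invariant C k" using part2_fwd[OF assms st] by blast
next
  assume "dual_self_F_split C i d \<and>
     (\<forall>k. direct_summand C (Cod C i) k \<and> sub_le C k i \<longrightarrow> fully_invariant C k)"
  then show "dual_strongly_self_F_split C i d" using part2_bwd[OF assms] by blast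
qed

end
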